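(* Let $G$ be a finite simple graph on $n\ge 2$ vertices. Then $\alpha(G)=2$ if and only if $\alpha_q(G)=2$.
   Context: $\alpha(G)$ denotes the independence number of $G$. For a finite simple graph $X$ and positive integers $s,d$, a quantum $s$-coclique matrix (in dimension $d$) is a $|V(X)|\times s$ array $P=(P_{vi})_{v\in V(X),\, i\in[s]}$ of orthogonal projections $P_{vi}\in\mathbb{C}^{d\times d}$ such that (a) $\sum_{v\in V(X)}P_{vi}=I_d$ for every $i\in[s]$; (b) $P_{vi}P_{uj}=0$ for all $i\neq j$ in $[s]$ and all adjacent vertices $u\sim v$; (c) $P_{vi}P_{vj}=0$ for all $v\in V(X)$ and all $i\neq j$ in $[s]$. The quantum independence number $\alpha_q(X)$ is the largest $s$ such that a quantum $s$-coclique matrix for $X$ exists for some $d\ge 1$. *)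

theory Defs
  imports "Jordan_Normal_Form.Schur_Decomposition"
begin

definition simple_graph :: "'a set \<Rightarrow> ('a \<Rightarrow> 'a \<Rightarrow> bool) \<Rightarrow> bool" where
  "simple_graph V E \<longleftrightarrow> finite V \<and> (\<forall>u v. E u v \<longrightarrow> u \<in> V \<and> v \<in> V)
     \<and> (\<forall>u v. E u v \<longrightarrow> E v u) \<and> (\<forall>v. \<not> E v v)"

definition independent_set :: "'a set \<Rightarrow> ('a \<Rightarrow> 'a \<Rightarrow> bool) \<Rightarrow> 'a set \<Rightarrow> bool" where
  "independent_set V E S \<longleftrightarrow> S \<subseteq> V \<and> (\<forall>u\<in>S. \<forall>v\<in>S. \<not> E u v)"

definition alpha :: "'a set \<Rightarrow> ('a \<Rightarrow> 'a \<Rightarrow> bool) \<Rightarrow> nat" where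
  "alpha V E = Max (card ` {S. independent_set V E S})"

definition orth_proj :: "nat \<Rightarrow> complex mat \<Rightarrow> bool" where
  "orth_proj d P \<longleftrightarrow> P \<in> carrier_mat d d \<and> P * P = P \<and> mat_adjoint P = P"

definition msum :: "nat \<Rightarrow> 'b set \<Rightarrow> ('b \<Rightarrow> complex mat) \<Rightarrow> complex mat" where
  "msum d A f = mat d d (\<lambda>jk. \<Sum>x\<in>A. f x $$ jk)"

definition quantum_coclique ::
  "'a set \<Rightarrow> ('a \<Rightarrow> 'a \<Rightarrow> bool) \<Rightarrow> nat \<Rightarrow> nat \<Rightarrow> ('a \<Rightarrow> nat \<Rightarrow> complex mat) \<Rightarrow> bool" where
  "quantum_coclique V E s d P \<longleftrightarrow>
     (\<forall>v\<in>V. \<forall>i<s. orth_proj d (P v i))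
   \<and> (\<forall>i<s. msum d V (\<lambda>v. P v i) = 1\<^sub>m d)
   \<and> (\<forall>i<s. \<forall>j<s. \<forall>u\<in>V. \<forall>v\<in>V. i \<noteq> j \<longrightarrow> E u v \<longrightarrow> P v i * P u j = 0\<^sub>m d d)
   \<and> (\<forall>v\<in>V. \<forall>i<s. \<forall>j<s. i \<noteq> j \<longrightarrow> P v i * P v j = 0\<^sub>m d d)"

definition alpha_q :: "'a set \<Rightarrow> ('a \<Rightarrow> 'a \<Rightarrow> bool) \<Rightarrow> nat" where
  "alpha_q V E = (GREATEST s. s \<ge> 1 \<and> (\<exists>d\<ge>1. \<exists>P. quantum_coclique V E s d P))"

end

theory Submission imports Defs begin

lemma msum_carrier[simp]: "msum d X f \<in> carrier_mat d d"
  unfolding msum_def by simp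

lemma msum_dims[simp]: "dim_row (msum d X f) = d" "dim_col (msum d X f) = d"
  unfolding msum_def by simp_all

lemma msum_index[simp]: "a < d \<Longrightarrow> b < d \<Longrightarrow> msum d X f $$ (a,b) = (\<Sum>x\<in>X. f x $$ (a,b))"
  unfolding msum_def by simp

lemma msum_left:
  assumes A: "A \<in> carrier_mat d d" and f: "\<And>x. x \<in> X \<Longrightarrow> f x \<in> carrier_mat d d"
  shows "A * msum d X f = msum d X (\<lambda>x. A * f x)"
proof (rule eq_matI)
  fix a b assume ab: "a < dim_row (msum d X (\<lambda>x. A * f x))" "b < dim_col (msum d X (\<lambda>x. A * f x))"
  hence a: "a < d" and b: "b < d" by auto
  have "(A * msum d X f) $$ (a,b) = (\<Sum>k<d. A $$ (a,k) * (\<Sum>x\<in>X. f x $$ (k,b)))"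
    using A a b by (simp add: scalar_prod_def row_def col_def atLeast0LessThan)
  also have "\<dots> = (\<Sum>x\<in>X. \<Sum>k<d. A $$ (a,k) * f x $$ (k,b))"
    by (simp add: sum_distrib_left sum.swap[of _ X])
  also have "\<dots> = msum d X (\<lambda>x. A * f x) $$ (a,b)"
    using a b proof (simp, intro sum.cong refl)
    fix x assume "x \<in> X" then have "f x \<in> carrier_mat d d" by (rule f)
    then show "(\<Sum>k<d. A $$ (a,k) * f x $$ (k,b)) = (A * f x) $$ (a,b)"
      using A a b by (simp add: scalar_prod_def row_def col_def atLeast0LessThan)
  qed
  finally show "(A * msum d X f) $$ (a,b) = msum d X (\<lambda>x. A * f x) $$ (a,b)" .
qed (use A in auto)

lemma msum_right:
  assumes B: "B \<in> carrier_mat d d" and f: "\<And>x. x \<in> X \<Longrightarrow> f x \<in> carrier_mat d d"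
  shows "msum d X f * B = msum d X (\<lambda>x. f x * B)"
proof (rule eq_matI)
  fix a b assume ab: "a < dim_row (msum d X (\<lambda>x. f x * B))" "b < dim_col (msum d X (\<lambda>x. f x * B))"
  hence a: "a < d" and b: "b < d" by auto
  have "(msum d X f * B) $$ (a,b) = (\<Sum>k<d. (\<Sum>x\<in>X. f x $$ (a,k)) * B $$ (k,b))"
    using B a b by (simp add: scalar_prod_def row_def col_def atLeast0LessThan)
  also have "\<dots> = (\<Sum>x\<in>X. \<Sum>k<d. f x $$ (a,k) * B $$ (k,b))"
    by (simp add: sum_distrib_right sum.swap[of _ X])
  also have "\<dots> = msum d X (\<lambda>x. f x * B) $$ (a,b)"
    using a b proof (simp, intro sum.cong refl)
    fix x assume "x \<in> X" then have "f x \<in> carrier_mat d d" by (rule f)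
    then show "(\<Sum>k<d. f x $$ (a,k) * B $$ (k,b)) = (f x * B) $$ (a,b)"
      using B a b by (simp add: scalar_prod_def row_def col_def atLeast0LessThan)
  qed
  finally show "(msum d X f * B) $$ (a,b) = msum d X (\<lambda>x. f x * B) $$ (a,b)" .
qed (use B in auto)

lemma msum_cong: "(\<And>x. x \<in> X \<Longrightarrow> f x = g x) \<Longrightarrow> msum d X f = msum d X g"
  unfolding msum_def by (metis (no_types, lifting) sum.cong)

lemma msum_zero:
  assumes "\<And>x. x \<in> X \<Longrightarrow> f x = 0\<^sub>m d d"
  shows "msum d X f = 0\<^sub>m d d"
  by (rule eq_matI) (use assms in auto)

lemma msum_single:
  assumes "finite X" "c \<in> X" "\<And>x. x \<in> X \<Longrightarrow> x \<noteq> c \<Longrightarrow> f x = 0\<^sub>m d d"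
    "f c \<in> carrier_mat d d"
  shows "msum d X f = f c"
proof (rule eq_matI)
  fix a b assume "a < dim_row (f c)" "b < dim_col (f c)"
  hence a: "a < d" and b: "b < d" using assms(4) by auto
  have "(\<Sum>x\<in>X. f x $$ (a,b)) = f c $$ (a,b)"
  proof -
    have "(\<Sum>x\<in>X. f x $$ (a,b)) = f c $$ (a,b) + (\<Sum>x\<in>X - {c}. f x $$ (a,b))"
      using assms(1,2) by (simp add: sum.remove)
    also have "(\<Sum>x\<in>X - {c}. f x $$ (a,b)) = 0"
      using assms(3) a b by (intro sum.neutral) auto
    finally show ?thesis by simp
  qed
  thus "msum d X f $$ (a,b) = f c $$ (a,b)" using a b by simp
qed (use assms in auto)

declare independent_set_def[simp del]

lemma herm_entry:
  assumes "orth_proj d P" "a < d" "b < d"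
  shows "P $$ (a,b) = cnj (P $$ (b,a))"
proof -
  have c: "P \<in> carrier_mat d d" and h: "mat_adjoint P = P" using assms(1) unfolding orth_proj_def by auto
  have "P $$ (a,b) = mat_adjoint P $$ (a,b)" using h by simp
  also have "\<dots> = cnj (P $$ (b,a))" using c assms(2,3)
    unfolding mat_adjoint_def by (simp add: mat_of_rows_def)
  finally show ?thesis .
qed

lemma adj_one: "mat_adjoint (1\<^sub>m n :: complex mat) = 1\<^sub>m n"
  by (rule eq_matI) (auto simp: mat_adjoint_def mat_of_rows_def)

lemma adj_zero: "mat_adjoint (0\<^sub>m n n :: complex mat) = 0\<^sub>m n n"
  by (rule eq_matI) (auto simp: mat_adjoint_def mat_of_rows_def)

lemma re_cnj_mult: "Re (cnj z * z) = (cmod z)\<^sup>2"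
  by (simp only: cmod_power2) (simp add: power2_eq_square)

lemma proj_diag_le1:
  fixes Q :: "complex mat"
  assumes Q: "Q \<in> carrier_mat d d" and idem: "Q * Q = Q"
    and herm: "\<And>a b. a < d \<Longrightarrow> b < d \<Longrightarrow> Q $$ (a,b) = cnj (Q $$ (b,a))"
    and d: "0 < d"
  shows "Re (Q $$ (0,0)) \<le> 1"
proof -
  have "Q $$ (0,0) = (Q * Q) $$ (0,0)" using idem by simp
  also have "\<dots> = (\<Sum>k<d. Q $$ (0,k) * Q $$ (k,0))"
    using Q d by (simp add: scalar_prod_def row_def col_def atLeast0LessThan)
  also have "\<dots> = (\<Sum>k<d. cnj (Q $$ (k,0)) * Q $$ (k,0))"
  proof (rule sum.cong[OF refl])
    fix k assume "k \<in> {..<d}"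
    thus "Q $$ (0,k) * Q $$ (k,0) = cnj (Q $$ (k,0)) * Q $$ (k,0)"
      using herm[of 0 k] d by simp
  qed
  finally have eq: "Q $$ (0,0) = (\<Sum>k<d. cnj (Q $$ (k,0)) * Q $$ (k,0))" .
  have "Re (Q $$ (0,0)) = (\<Sum>k<d. (cmod (Q $$ (k,0)))\<^sup>2)"
    unfolding eq Re_sum by (intro sum.cong refl) (rule re_cnj_mult)
  also have "\<dots> \<ge> (cmod (Q $$ (0,0)))\<^sup>2"
    using d by (intro member_le_sum) auto
  finally have r: "Re (Q $$ (0,0)) \<ge> (cmod (Q $$ (0,0)))\<^sup>2" .
  have "(Re (Q $$ (0,0)))\<^sup>2 \<le> (cmod (Q $$ (0,0)))\<^sup>2"
    by (simp only: cmod_power2) simp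
  with r have "(Re (Q $$ (0,0)))\<^sup>2 \<le> Re (Q $$ (0,0))" by linarith
  thus ?thesis by (cases "Re (Q $$ (0,0)) \<le> 1") (auto simp: power2_eq_square dest: mult_strict_left_mono[of 1 "Re (Q $$ (0,0))" "Re (Q $$ (0,0))"])
qed

lemma qc_restrict: "quantum_coclique V E s d P \<Longrightarrow> t \<le> s \<Longrightarrow> quantum_coclique V E t d P"
  unfolding quantum_coclique_def by auto

lemma qc_zero_false:
  assumes qc: "quantum_coclique V E s d P" and d: "0 < d"
    and ij: "i < s" "j < s" "i \<noteq> j"
    and z: "\<And>x y. x \<in> V \<Longrightarrow> y \<in> V \<Longrightarrow> P x i * P y j = 0\<^sub>m d d"
  shows False
proof -
  have pr: "\<And>v k. v \<in> V \<Longrightarrow> k < s \<Longrightarrow> P v k \<in> carrier_mat d d"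
    using qc unfolding quantum_coclique_def orth_proj_def by auto
  have sm: "\<And>k. k < s \<Longrightarrow> msum d V (\<lambda>v. P v k) = 1\<^sub>m d"
    using qc unfolding quantum_coclique_def by auto
  have "\<And>x. x \<in> V \<Longrightarrow> P x i = 0\<^sub>m d d"
  proof -
    fix x assume x: "x \<in> V"
    have "P x i = P x i * 1\<^sub>m d" using pr[OF x ij(1)] by simp
    also have "\<dots> = P x i * msum d V (\<lambda>y. P y j)" using sm[OF ij(2)] by simp
    also have "\<dots> = msum d V (\<lambda>y. P x i * P y j)"
      using pr x ij by (intro msum_left) auto
    also have "\<dots> = 0\<^sub>m d d" using z x by (intro msum_zero) auto
    finally show "P x i = 0\<^sub>m d d" .
  qed
  hence "msum d V (\<lambda>v. P v i) = 0\<^sub>m d d" by (intro msum_zero) auto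
  with sm[OF ij(1)] have "(1\<^sub>m d :: complex mat) = 0\<^sub>m d d" by simp
  hence "(1\<^sub>m d :: complex mat) $$ (0,0) = 0\<^sub>m d d $$ (0,0)" by simp
  with d show False by simp
qed

lemma qc_bound:
  assumes qc: "quantum_coclique V E s d P" and d: "0 < d" and fin: "finite V"
  shows "s \<le> card V"
proof -
  have op: "\<And>v k. v \<in> V \<Longrightarrow> k < s \<Longrightarrow> orth_proj d (P v k)"
    using qc unfolding quantum_coclique_def by auto
  have pr: "\<And>v k. v \<in> V \<Longrightarrow> k < s \<Longrightarrow> P v k \<in> carrier_mat d d"
    using op unfolding orth_proj_def by auto
  have idm: "\<And>v k. v \<in> V \<Longrightarrow> k < s \<Longrightarrow> P v k * P v k = P v k"
    using op unfolding orth_proj_def by auto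
  have sm: "\<And>k. k < s \<Longrightarrow> msum d V (\<lambda>v. P v k) = 1\<^sub>m d"
    using qc unfolding quantum_coclique_def by auto
  have orth: "\<And>v i j. v \<in> V \<Longrightarrow> i < s \<Longrightarrow> j < s \<Longrightarrow> i \<noteq> j \<Longrightarrow> P v i * P v j = 0\<^sub>m d d"
    using qc unfolding quantum_coclique_def by auto
  define Q where "Q v = msum d {..<s} (P v)" for v
  have le1: "Re (Q v $$ (0,0)) \<le> 1" if v: "v \<in> V" for v
  proof (rule proj_diag_le1[of _ d])
    show "Q v \<in> carrier_mat d d" unfolding Q_def by simp
    have "Q v * Q v = msum d {..<s} (\<lambda>i. P v i * Q v)"
      unfolding Q_def using pr v by (intro msum_right) auto
    also have "\<dots> = msum d {..<s} (\<lambda>i. P v i)"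
    proof (rule msum_cong)
      fix i assume "i \<in> {..<s}"
      hence True: "i < s" by simp
      have "P v i * Q v = msum d {..<s} (\<lambda>j. P v i * P v j)"
        unfolding Q_def using pr v True by (intro msum_left) auto
      also have "\<dots> = P v i * P v i"
        using True orth v pr[OF v True] by (intro msum_single) auto
      finally show "P v i * Q v = P v i" using idm v True by simp
    qed
    finally show "Q v * Q v = Q v" unfolding Q_def by simp
    show "\<And>a b. a < d \<Longrightarrow> b < d \<Longrightarrow> Q v $$ (a,b) = cnj (Q v $$ (b,a))"
    proof -
      fix a b assume ab: "a < d" "b < d"
      have "Q v $$ (a,b) = (\<Sum>i<s. P v i $$ (a,b))" unfolding Q_def using ab by simp
      also have "\<dots> = (\<Sum>i<s. cnj (P v i $$ (b,a)))"
      proof (rule sum.cong[OF refl])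
        fix i assume "i \<in> {..<s}"
        thus "P v i $$ (a,b) = cnj (P v i $$ (b,a))" using herm_entry[OF op[OF v] ab] by simp
      qed
      also have "\<dots> = cnj (Q v $$ (b,a))" unfolding Q_def using ab by simp
      finally show "Q v $$ (a,b) = cnj (Q v $$ (b,a))" .
    qed
  qed (use d in auto)
  have "(\<Sum>v\<in>V. Re (Q v $$ (0,0))) = Re (\<Sum>v\<in>V. \<Sum>i<s. P v i $$ (0,0))"
    unfolding Q_def using d by (simp add: Re_sum)
  also have "(\<Sum>v\<in>V. \<Sum>i<s. P v i $$ (0,0)) = (\<Sum>i<s. \<Sum>v\<in>V. P v i $$ (0,0))"
    by (rule sum.swap)
  also have "\<dots> = (\<Sum>i<s. 1)"
  proof (intro sum.cong refl)
    fix i assume "i \<in> {..<s}"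
    hence "msum d V (\<lambda>v. P v i) $$ (0,0) = 1" using sm d by simp
    thus "(\<Sum>v\<in>V. P v i $$ (0,0)) = 1" using d by simp
  qed
  finally have "real s = (\<Sum>v\<in>V. Re (Q v $$ (0,0)))" by simp
  also have "\<dots> \<le> (\<Sum>v\<in>V. 1)" using le1 by (intro sum_mono) auto
  finally show ?thesis by simp
qed

lemma classical_qc:
  assumes fin: "finite V" and ind: "independent_set V E I" and s: "card I = s"
  shows "quantum_coclique V E s 1 (\<lambda>v i. if v = (SOME f. bij_betw f {0..<card I} I) i then 1\<^sub>m 1 else 0\<^sub>m 1 1)"
proof -
  have IV: "I \<subseteq> V" and nE: "\<And>u v. u \<in> I \<Longrightarrow> v \<in> I \<Longrightarrow> \<not> E u v"
    using ind unfolding independent_set_def by auto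
  have finI: "finite I" using fin IV finite_subset by blast
  define f where "f = (SOME f. bij_betw f {0..<card I} I)"
  have bij: "bij_betw f {0..<card I} I"
    unfolding f_def using ex_bij_betw_nat_finite[OF finI] by (rule someI_ex)
  have fI: "\<And>i. i < s \<Longrightarrow> f i \<in> I" using bij s unfolding bij_betw_def by auto
  have finj: "\<And>i j. i < s \<Longrightarrow> j < s \<Longrightarrow> f i = f j \<Longrightarrow> i = j"
    using bij s unfolding bij_betw_def inj_on_def by auto
  have op1: "orth_proj 1 (1\<^sub>m 1)" unfolding orth_proj_def by (simp add: adj_one)
  have op0: "orth_proj 1 (0\<^sub>m 1 1)" unfolding orth_proj_def by (simp add: adj_zero)
  show ?thesis
    unfolding f_def[symmetric] quantum_coclique_def
  proof (intro conjI ballI allI impI)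
    fix v i assume "v \<in> V" "i < s"
    show "orth_proj 1 (if v = f i then 1\<^sub>m 1 else 0\<^sub>m 1 1)" using op0 op1 by simp
  next
    fix i assume i: "i < s"
    show "msum 1 V (\<lambda>v. if v = f i then 1\<^sub>m 1 else 0\<^sub>m 1 1) = 1\<^sub>m 1"
    proof -
      have "msum 1 V (\<lambda>v. if v = f i then 1\<^sub>m 1 else 0\<^sub>m 1 1) = (if f i = f i then 1\<^sub>m 1 else (0\<^sub>m 1 1 :: complex mat))"
        by (rule msum_single) (use fin fI[OF i] IV in auto)
      thus ?thesis by simp
    qed
  next
    fix i j u v assume ij: "i < s" "j < s" "u \<in> V" "v \<in> V" "i \<noteq> j" "E u v"
    show "(if v = f i then 1\<^sub>m 1 else 0\<^sub>m 1 1) * (if u = f j then 1\<^sub>m 1 else (0\<^sub>m 1 1 :: complex mat)) = 0\<^sub>m 1 1"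
      using nE[OF fI[OF ij(2)] fI[OF ij(1)]] ij by auto
  next
    fix v i j assume ij: "v \<in> V" "i < s" "j < s" "i \<noteq> j"
    show "(if v = f i then 1\<^sub>m 1 else 0\<^sub>m 1 1) * (if v = f j then 1\<^sub>m 1 else (0\<^sub>m 1 1 :: complex mat)) = 0\<^sub>m 1 1"
      using finj[OF ij(2,3)] ij by auto
  qed
qed

lemma qc_three_zero:
  assumes sg: "simple_graph V E" and qc: "quantum_coclique V E s d P" and s: "3 \<le> s"
    and no3: "\<And>I. independent_set V E I \<Longrightarrow> card I \<noteq> 3"
    and x: "x \<in> V" and y: "y \<in> V"
  shows "P x 0 * P y 1 = 0\<^sub>m d d"
proof -
  have symE: "\<And>u v. E u v \<Longrightarrow> E v u" and irr: "\<And>v. \<not> E v v" and fin: "finite V" using sg unfolding simple_graph_def by auto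
  have pr: "\<And>v k. v \<in> V \<Longrightarrow> k < s \<Longrightarrow> P v k \<in> carrier_mat d d"
    using qc unfolding quantum_coclique_def orth_proj_def by auto
  have sm: "\<And>k. k < s \<Longrightarrow> msum d V (\<lambda>v. P v k) = 1\<^sub>m d"
    using qc unfolding quantum_coclique_def by auto
  have adj: "\<And>u v i j. i < s \<Longrightarrow> j < s \<Longrightarrow> u \<in> V \<Longrightarrow> v \<in> V \<Longrightarrow> i \<noteq> j \<Longrightarrow> E u v \<or> u = v \<Longrightarrow> P v i * P u j = 0\<^sub>m d d"
    using qc unfolding quantum_coclique_def by auto
  show ?thesis
  proof (cases "x = y \<or> E x y")
    case True
    then show ?thesis using adj[of 0 1 y x] x y s symE by auto
  next
    case False
    have "P x 0 * P y 1 = P x 0 * (1\<^sub>m d * P y 1)" using pr[of y 1] y s by simp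
    also have "\<dots> = P x 0 * (msum d V (\<lambda>z. P z 2) * P y 1)" using sm[of 2] s by simp
    also have "\<dots> = P x 0 * msum d V (\<lambda>z. P z 2 * P y 1)"
      using pr y s by (subst msum_right) auto
    also have "\<dots> = msum d V (\<lambda>z. P x 0 * (P z 2 * P y 1))"
    proof (intro msum_left)
      fix z assume "z \<in> V" thus "P z 2 * P y 1 \<in> carrier_mat d d" using pr[of z 2] pr[of y 1] y s by auto
    qed (use pr x s in auto)
    also have "\<dots> = 0\<^sub>m d d"
    proof (rule msum_zero)
      fix z assume z: "z \<in> V"
      have c0: "P x 0 \<in> carrier_mat d d" and c1: "P y 1 \<in> carrier_mat d d" and c2: "P z 2 \<in> carrier_mat d d"
        using pr x y z s by auto
      show "P x 0 * (P z 2 * P y 1) = 0\<^sub>m d d"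
      proof (cases "z = y \<or> E z y")
        case True
        hence "P z 2 * P y 1 = 0\<^sub>m d d" using adj[of 2 1 y z] y z s symE by auto
        thus ?thesis using c0 by simp
      next
        case F2: False
        show ?thesis
        proof (cases "z = x \<or> E z x")
          case True
          hence "P x 0 * P z 2 = 0\<^sub>m d d" using adj[of 0 2 z x] x z s by auto
          hence "P x 0 * (P z 2 * P y 1) = 0\<^sub>m d d * P y 1"
            using c0 c1 c2 by (simp add: assoc_mult_mat[symmetric])
          thus ?thesis using c1 by simp
        next
          case F3: False
          have "independent_set V E {x,y,z}"
            unfolding independent_set_def using x y z False F2 F3 symE irr by auto
          moreover have "card {x,y,z} = 3" using False F2 F3 by auto
          ultimately show ?thesis using no3 by blast
        qed
      qed
    qed
    finally show ?thesis .
  qed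
qed

theorem mainTheorem7:
  fixes V :: "'a set" and E :: "'a \<Rightarrow> 'a \<Rightarrow> bool"
  assumes "simple_graph V E" and "card V \<ge> 2"
  shows "alpha V E = 2 \<longleftrightarrow> alpha_q V E = 2"
proof -
  note sg = assms(1)
  have fin: "finite V" and symE: "\<And>u v. E u v \<Longrightarrow> E v u" and irr: "\<And>v. \<not> E v v"
    using sg unfolding simple_graph_def by auto
  have finS: "finite {S. independent_set V E S}"
    by (rule finite_subset[of _ "Pow V"]) (use fin in \<open>auto simp: independent_set_def\<close>)
  have ind_le: "\<And>I. independent_set V E I \<Longrightarrow> card I \<le> alpha V E"
    unfolding alpha_def by (rule Max_ge[OF finite_imageI[OF finS]]) auto
  have "alpha V E \<in> card ` {S. independent_set V E S}"
    unfolding alpha_def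
    by (intro Max_in finite_imageI[OF finS]) (auto intro: exI[of _ "{}"] simp: independent_set_def)
  then obtain I0 where I0: "independent_set V E I0" "card I0 = alpha V E" by auto
  define Qp where "Qp s \<longleftrightarrow> s \<ge> 1 \<and> (\<exists>d\<ge>1. \<exists>P. quantum_coclique V E s d P)" for s
  have aq: "alpha_q V E = Greatest Qp" unfolding alpha_q_def Qp_def by simp
  have qbound: "\<And>s. Qp s \<Longrightarrow> s \<le> card V"
    unfolding Qp_def using qc_bound fin by fastforce
  have classical: "\<And>I. independent_set V E I \<Longrightarrow> card I \<ge> 1 \<Longrightarrow> Qp (card I)"
    unfolding Qp_def using classical_qc[OF fin] by blast
  have pair: "\<exists>x\<in>V. \<exists>y\<in>V. x \<noteq> y \<and> \<not> E x y" if "Qp 2"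
  proof (rule ccontr)
    assume nope: "\<not> ?thesis"
    from that obtain d P where d: "d \<ge> 1" and qc: "quantum_coclique V E 2 d P"
      unfolding Qp_def by auto
    have adj: "\<And>u v i j. i < 2 \<Longrightarrow> j < 2 \<Longrightarrow> u \<in> V \<Longrightarrow> v \<in> V \<Longrightarrow> i \<noteq> j \<Longrightarrow> E u v \<or> u = v \<Longrightarrow> P v i * P u j = 0\<^sub>m d d"
      using qc unfolding quantum_coclique_def by auto
    show False
    proof (rule qc_zero_false[OF qc, of 0 1])
      fix x y assume xy: "x \<in> V" "y \<in> V"
      hence "E y x \<or> y = x" using nope symE by blast
      thus "P x 0 * P y 1 = 0\<^sub>m d d" using adj[of 0 1 y x] xy by auto
    qed (use d in auto)
  qed
  show ?thesis
  proof
    assume a2: "alpha V E = 2"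
    have q2: "Qp 2" using classical[OF I0(1)] I0(2) a2 by simp
    have le2: "s \<le> 2" if "Qp s" for s
    proof (rule ccontr)
      assume "\<not> s \<le> 2"
      hence s3: "3 \<le> s" by simp
      from that obtain d P where d: "d \<ge> 1" and qc: "quantum_coclique V E s d P"
        unfolding Qp_def by auto
      have no3: "\<And>I. independent_set V E I \<Longrightarrow> card I \<noteq> 3" using ind_le a2 by fastforce
      show False
        by (rule qc_zero_false[OF qc, of 0 1])
           (use d s3 qc_three_zero[OF sg qc s3 no3] in auto)
    qed
    show "alpha_q V E = 2" unfolding aq by (rule Greatest_equality) (use q2 le2 in auto)
  next
    assume q: "alpha_q V E = 2"
    obtain v where v: "v \<in> V" using assms(2) by (metis card.empty ex_in_conv not_numeral_le_zero)
    have "independent_set V E {v}" using v irr unfolding independent_set_def by auto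
    hence a1: "alpha V E \<ge> 1" using ind_le by fastforce
    have qa: "Qp (alpha V E)" using classical[OF I0(1)] I0(2) a1 by simp
    have "alpha V E \<le> Greatest Qp" by (rule Greatest_le_nat[of Qp, OF qa qbound])
    hence le: "alpha V E \<le> 2" using q aq by simp
    have "Qp (Greatest Qp)" by (rule GreatestI_nat[of Qp, OF qa qbound])
    hence "Qp 2" using q aq by simp
    then obtain x y where xy: "x \<in> V" "y \<in> V" "x \<noteq> y" "\<not> E x y" using pair by blast
    have "independent_set V E {x,y}" using xy irr symE unfolding independent_set_def by auto
    hence "card {x,y} \<le> alpha V E" by (rule ind_le)
    with xy le show "alpha V E = 2" by simp
  qed
qed

end
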